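(* Let $d\ge 1$ and $\delta>0$, and let $\mathcal{W}$ and $\mathcal{N}$ be the sets of trees defined in the context. Then $\mathcal{W}$ and $\mathcal{N}$ are both finite sets.
   Context: Trees are formal symbols. The set $\widehat{\mathcal{T}}_r$ is the smallest set containing the generators $\mathbf{1},\mathbf{X}_1,\dots,\mathbf{X}_d,\Xi$ and such that whenever $\tau_1,\tau_2,\tau_3\in\widehat{\mathcal{T}}_r$, the formal expression $\mathcal{I}(\tau_1)\mathcal{I}(\tau_2)\mathcal{I}(\tau_3)$ (a non-commutative "tree product" of the three "planted trees" $\mathcal{I}(\tau_k)$; different orderings of the factors give different trees) belongs to $\widehat{\mathcal{T}}_r$. The order $|\cdot|$ of a tree is defined recursively by $|\mathbf{1}|=-2$, $|\mathbf{X}_i|=-1$ for $1\le i\le d$, $|\Xi|=-3+\delta$, $|\mathcal{I}(\tau_1)\mathcal{I}(\tau_2)\mathcal{I}(\tau_3)|=6+|\tau_1|+|\tau_2|+|\tau_3|$ (and $|\mathcal{I}(\tau)|=|\tau|+2$ for planted trees). Define $\mathcal{W}=\{\tau\in\widehat{\mathcal{T}}_r:\ |\tau|<-2\}$ and $\mathcal{N}=\{\tau\in\widehat{\mathcal{T}}_r:\ -2\le|\tau|\le 0\}$. *)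

theory Defs
  imports Complex_Main
begin

text \<open>Formal trees. \<open>TOne\<close> is the symbol 1, \<open>TX i\<close> is X_i, \<open>TXi\<close> is Xi, and
 \<open>TProd t1 t2 t3\<close> is the (ordered, non-commutative) tree product I(t1) I(t2) I(t3).\<close>
datatype tree = TOne | TX nat | TXi | TProd tree tree tree

fun in_Tr :: "nat \<Rightarrow> tree \<Rightarrow> bool" where
  "in_Tr d TOne = True"
| "in_Tr d (TX i) = (1 \<le> i \<and> i \<le> d)"
| "in_Tr d TXi = True"
| "in_Tr d (TProd t1 t2 t3) = (in_Tr d t1 \<and> in_Tr d t2 \<and> in_Tr d t3)"

definition Tr :: "nat \<Rightarrow> tree set" where
  "Tr d = {t. in_Tr d t}"

fun tree_order :: "real \<Rightarrow> tree \<Rightarrow> real" where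
  "tree_order \<delta> TOne = -2"
| "tree_order \<delta> (TX i) = -1"
| "tree_order \<delta> TXi = -3 + \<delta>"
| "tree_order \<delta> (TProd t1 t2 t3) = 6 + tree_order \<delta> t1 + tree_order \<delta> t2 + tree_order \<delta> t3"

definition W_set :: "nat \<Rightarrow> real \<Rightarrow> tree set" where
  "W_set d \<delta> = {t \<in> Tr d. tree_order \<delta> t < -2}"

definition N_set :: "nat \<Rightarrow> real \<Rightarrow> tree set" where
  "N_set d \<delta> = {t \<in> Tr d. -2 \<le> tree_order \<delta> t \<and> tree_order \<delta> t \<le> 0}"

end

theory Submission
  imports Defs
begin

fun nprod :: "tree \<Rightarrow> nat" where
  "nprod (TProd a b c) = Suc (nprod a + nprod b + nprod c)"
| "nprod _ = 0"

lemma order_lb: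
  assumes "0 < e" "e \<le> 1" "e \<le> \<delta>"
  shows "tree_order \<delta> t \<ge> (2 * real (nprod t) + 1) * e - 3"
  using assms by (induction t) (auto simp: algebra_simps)

lemma fin_bounded: "finite {t. in_Tr d t \<and> nprod t \<le> n}"
proof (induction n)
  case 0
  have "{t. in_Tr d t \<and> nprod t \<le> 0} \<subseteq> {TOne, TXi} \<union> TX ` {1..d}"
  proof
    fix t assume "t \<in> {t. in_Tr d t \<and> nprod t \<le> 0}"
    then show "t \<in> {TOne, TXi} \<union> TX ` {1..d}" by (cases t) auto
  qed
  then show ?case by (rule finite_subset) auto
next
  case (Suc n)
  let ?S = "{t. in_Tr d t \<and> nprod t \<le> n}"
  have "{t. in_Tr d t \<and> nprod t \<le> Suc n} \<subseteq> {TOne, TXi} \<union> TX ` {1..d}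
        \<union> (\<lambda>(a,b,c). TProd a b c) ` (?S \<times> ?S \<times> ?S)"
  proof
    fix t assume "t \<in> {t. in_Tr d t \<and> nprod t \<le> Suc n}"
    then show "t \<in> {TOne, TXi} \<union> TX ` {1..d} \<union> (\<lambda>(a,b,c). TProd a b c) ` (?S \<times> ?S \<times> ?S)"
      by (cases t) (auto simp: image_iff)
  qed
  then show ?case by (rule finite_subset) (use Suc in auto)
qed

theorem lemma3p3:
  fixes d :: nat and \<delta> :: real
  assumes "d \<ge> 1" and "\<delta> > 0"
  shows "finite (W_set d \<delta>) \<and> finite (N_set d \<delta>)"
proof -
  define e where "e = min \<delta> 1"
  have e: "0 < e" "e \<le> 1" "e \<le> \<delta>" using assms by (auto simp: e_def)
  define n where "n = nat (ceiling (3 / e))"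
  have sub: "{t \<in> Tr d. tree_order \<delta> t \<le> 0} \<subseteq> {t. in_Tr d t \<and> nprod t \<le> n}"
  proof
    fix t assume t: "t \<in> {t \<in> Tr d. tree_order \<delta> t \<le> 0}"
    have "(2 * real (nprod t) + 1) * e - 3 \<le> 0"
      using order_lb[OF e, of t] t by auto
    then have "real (nprod t) * e \<le> 3" using e by (simp add: algebra_simps)
    then have "real (nprod t) \<le> 3 / e" using e by (simp add: field_simps)
    then have "nprod t \<le> n" unfolding n_def by linarith
    then show "t \<in> {t. in_Tr d t \<and> nprod t \<le> n}" using t by (auto simp: Tr_def)
  qed
  have f: "finite {t \<in> Tr d. tree_order \<delta> t \<le> 0}"
    using finite_subset[OF sub fin_bounded] .
  have "W_set d \<delta> \<subseteq> {t \<in> Tr d. tree_order \<delta> t \<le> 0}" by (auto simp: W_set_def)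
  moreover have "N_set d \<delta> \<subseteq> {t \<in> Tr d. tree_order \<delta> t \<le> 0}" by (auto simp: N_set_def)
  ultimately show ?thesis using f finite_subset by blast
qed

end
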